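(* Assume conditions (C1)–(C5). Let $\zeta\in\Theta$ be $q_0$-periodic for some $q_0\in\mathbb N$, i.e. $\zeta_{k+q_0}=\zeta_k$ for all $k\in\mathbb Z$, and let $p_0=\mathrm{lcm}\{q_0,p\}/p$. Then $\varphi_\zeta(t+p_0\omega)=\varphi_\zeta(t)$ for all $t\in\mathbb T_0$.
   Context: Fix integers $m,n\ge1$ and $r\ge0$. Cells are indexed by pairs $(i,j)$, $1\le i\le m$, $1\le j\le n$. The $r$-neighbourhood of $(i,j)$ is $N_r(i,j)=\{(h,l):1\le h\le m,\ 1\le l\le n,\ \max(|h-i|,|l-j|)\le r\}$. Fix constants $a_{ij}>0$, $C^{hl}_{ij}\ge0$, and a continuous function $f:\mathbb R\to\mathbb R$. Vectors of $\mathbb R^{mn}$ are written $v=\{v_{ij}\}$, with norm $\|v\|=\max_{(i,j)}|v_{ij}|$. Time scale: $\{\theta_k\}_{k\in\mathbb Z}$ is strictly increasing, $\theta_{-1}<0<\theta_0$, and there exist $\omega>0$ and $p\in\mathbb N$ with $\theta_{k+2p}=\theta_k+\omega$ for all $k$. Set $\mathbb T_0=\bigcup_{k\in\mathbb Z}[\theta_{2k-1},\theta_{2k}]$, $\delta_k=\theta_{2k+1}-\theta_{2k}$, $\eta_k=\theta_{2k}-\theta_{2k-1}$ (both $p$-periodic in $k$), $\delta=\max_{1\le k\le p}\delta_k$. On $\mathbb T_0'=\mathbb T_0\setminus\{\theta_{2k-1}:k\in\mathbb Z\}$ define $\psi(t)=t-\sum_{0<\theta_{2k}<t}\delta_k$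 for $t\ge0$ and $\psi(t)=t+\sum_{t\le\theta_{2k}<0}\delta_k$ for $t<0$; put $s_k=\psi(\theta_{2k})$, and write $\psi(\omega):=\omega-\sum_{k=1}^p\delta_k=\sum_{k=1}^p\eta_k$. Inputs: $\Lambda\subset\mathbb R^{mn}$ is compact and $F:\Lambda\to\Lambda$ is continuous. $\Theta$ is the set of all sequences $\zeta=\{\zeta_k\}_{k\in\mathbb Z}$, $\zeta_k=\{\zeta^{ij}_k\}\in\Lambda$, with $\zeta_{k+1}=F(\zeta_k)$ for all $k\in\mathbb Z$. For $\zeta\in\Theta$, $L_{ij}(t,\zeta)=\zeta^{ij}_k$ for $t\in[\theta_{2k-1},\theta_{2k}]$. Network $(N_\zeta)$ on $\mathbb T_0$: a solution on $\mathbb T_0$ is a function continuous and (one-sidedly at endpoints) differentiable on each $[\theta_{2k-1},\theta_{2k}]$ satisfying there $x_{ij}'=-a_{ij}x_{ij}-\sum_{(h,l)\in N_r(i,j)}C^{hl}_{ij}f(x_{hl})x_{ij}+\zeta^{ij}_k$, together with $x_{ij}(\theta_{2k+1})=(1-\delta_ka_{ij})x_{ij}(\theta_{2k})-\delta_k\sum_{(h,l)\in N_r(i,j)}C^{hl}_{ij}f(x_{hl}(\theta_{2k}))x_{ij}(\theta_{2k})+\delta_k\zeta^{ij}_k$ (this is the $\Delta$-equation $x^\Delta_{ij}=-a_{ij}x_{ij}-\sum C^{hl}_{ij}f(x_{hl})x_{ij}+L_{ij}(t,\zeta)$ on $\mathbb T_0$). Let $u_{ij}(s,\tau)=e^{-a_{ij}(s-\tau)}\prod_{\nu=l}^{k}(1-\delta_\nu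 a_{ij})$ if $s_{l-1}<\tau\le s_l$, $s_k<s\le s_{k+1}$, $k\ge l$, and $u_{ij}(s,\tau)=e^{-a_{ij}(s-\tau)}$ if $s_k<\tau\le s\le s_{k+1}$. Let $\lambda_{ij}=a_{ij}-\frac1{\psi(\omega)}\sum_{\nu=0}^{p-1}\ln|1-\delta_\nu a_{ij}|$, $\lambda=\min_{(i,j)}\lambda_{ij}$. Conditions: (C1) $\delta_ka_{ij}\ne1$ for all $i,j,k$; (C2) $\lambda>0$; (C3) $\sup_{s\in\mathbb R}|f(s)|\le M_f$ for some $M_f>0$; (C4) $|f(s_1)-f(s_2)|\le L_f|s_1-s_2|$ for all $s_1,s_2$, for some $L_f>0$. Under (C1),(C2) fix positive numbers $K_{ij}$ with $|u_{ij}(s,\tau)|\le K_{ij}e^{-\lambda_{ij}(s-\tau)}$ for $s\ge\tau$. Define $\bar c=\max_{(i,j)}\big(\frac{K_{ij}}{\lambda_{ij}}+\frac{p\delta K_{ij}}{1-e^{-\lambda_{ij}\psi(\omega)}}\big)\sum_{(h,l)\in N_r(i,j)}C^{hl}_{ij}$, $M_F=\max_{\eta\in\Lambda}\|F(\eta)\|$, $H_0=\frac{M_F}{1-M_f\bar c}\max_{(i,j)}\big(\frac{K_{ij}}{\lambda_{ij}}+\frac{p\delta K_{ij}}{1-e^{-\lambda_{ij}\psi(\omega)}}\big)$. (C5) $(M_f+H_0L_f)\bar c<1$. $\varphi_\zeta$ denotes the unique solution of $(N_\zeta)$ defined on all of $\mathbb T_0$ with $\sup_{t\in\mathbb T_0}\|\varphi_\zeta(t)\|\le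 H_0$ (it exists and is unique under (C1)–(C5)). *)

theory Defs
  imports "HOL-Analysis.Analysis"
begin

text \<open>Cells are pairs (i,j) with 1 \<le> i \<le> m, 1 \<le> j \<le> n. Vectors of R^{mn} are
  functions on nat \<times> nat; only their values on the cells matter.\<close>

type_synonym vec = "nat \<times> nat \<Rightarrow> real"

definition cells :: "nat \<Rightarrow> nat \<Rightarrow> (nat \<times> nat) set" where
  "cells m n = {1..m} \<times> {1..n}"

definition nbhd :: "nat \<Rightarrow> nat \<Rightarrow> nat \<Rightarrow> nat \<times> nat \<Rightarrow> (nat \<times> nat) set" where
  "nbhd m n r c = {hl \<in> cells m n.
     max \<bar>int (fst hl) - int (fst c)\<bar> \<bar>int (snd hl) - int (snd c)\<bar> \<le> int r}"

definition vnorm :: "nat \<Rightarrow> nat \<Rightarrow> vec \<Rightarrow> real" where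
  "vnorm m n v = Max ((\<lambda>c. \<bar>v c\<bar>) ` cells m n)"

definition T0 :: "(int \<Rightarrow> real) \<Rightarrow> real set" where
  "T0 \<theta> = (\<Union>k::int. {\<theta> (2*k - 1) .. \<theta> (2*k)})"

definition dlt :: "(int \<Rightarrow> real) \<Rightarrow> int \<Rightarrow> real" where
  "dlt \<theta> k = \<theta> (2*k + 1) - \<theta> (2*k)"

definition eta :: "(int \<Rightarrow> real) \<Rightarrow> int \<Rightarrow> real" where
  "eta \<theta> k = \<theta> (2*k) - \<theta> (2*k - 1)"

definition psi :: "(int \<Rightarrow> real) \<Rightarrow> real \<Rightarrow> real" where
  "psi \<theta> t = (if t \<ge> 0 then t - (\<Sum>k\<in>{k. 0 < \<theta> (2*k) \<and> \<theta> (2*k) < t}. dlt \<theta> k)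
               else t + (\<Sum>k\<in>{k. t \<le> \<theta> (2*k) \<and> \<theta> (2*k) < 0}. dlt \<theta> k))"

definition sk :: "(int \<Rightarrow> real) \<Rightarrow> int \<Rightarrow> real" where
  "sk \<theta> k = psi \<theta> (\<theta> (2*k))"

definition psi_om :: "(int \<Rightarrow> real) \<Rightarrow> nat \<Rightarrow> real" where
  "psi_om \<theta> p = (\<Sum>k\<in>{1..int p}. eta \<theta> k)"

text \<open>u_ij(s,tau) for s \<ge> tau, with a = a_ij: if s_{l-1} < tau \<le> s_l and s_k < s \<le> s_{k+1}
  then u = exp(-a(s-tau)) * prod_{nu=l..k} (1 - delta_nu a), the product being empty
  (=1) when k < l, i.e. k = l-1.\<close>
definition uu :: "(int \<Rightarrow> real) \<Rightarrow> real \<Rightarrow> real \<Rightarrow> real \<Rightarrow> real" where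
  "uu \<theta> a s \<tau> =
     (let l = (THE l. sk \<theta> (l - 1) < \<tau> \<and> \<tau> \<le> sk \<theta> l);
          k = (THE k. sk \<theta> k < s \<and> s \<le> sk \<theta> (k + 1))
      in exp (- a * (s - \<tau>)) * (\<Prod>\<nu>\<in>{l..k}. 1 - dlt \<theta> \<nu> * a))"

definition lam :: "(int \<Rightarrow> real) \<Rightarrow> nat \<Rightarrow> real \<Rightarrow> real" where
  "lam \<theta> p a = a - (1 / psi_om \<theta> p) * (\<Sum>\<nu><p. ln \<bar>1 - dlt \<theta> (int \<nu>) * a\<bar>)"

definition dmax :: "(int \<Rightarrow> real) \<Rightarrow> nat \<Rightarrow> real" where
  "dmax \<theta> p = Max (dlt \<theta> ` {1..int p})"

definition coefK :: "(int \<Rightarrow> real) \<Rightarrow> nat \<Rightarrow> real \<Rightarrow> real \<Rightarrow> real" where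
  "coefK \<theta> p a K = K / lam \<theta> p a
     + real p * dmax \<theta> p * K / (1 - exp (- lam \<theta> p a * psi_om \<theta> p))"

definition cbar :: "nat \<Rightarrow> nat \<Rightarrow> nat \<Rightarrow> (int \<Rightarrow> real) \<Rightarrow> nat \<Rightarrow> (nat \<times> nat \<Rightarrow> real)
    \<Rightarrow> (nat \<times> nat \<Rightarrow> nat \<times> nat \<Rightarrow> real) \<Rightarrow> (nat \<times> nat \<Rightarrow> real) \<Rightarrow> real" where
  "cbar m n r \<theta> p a C K =
     Max ((\<lambda>c. coefK \<theta> p (a c) (K c) * (\<Sum>hl\<in>nbhd m n r c. C c hl)) ` cells m n)"

definition MF :: "nat \<Rightarrow> nat \<Rightarrow> vec set \<Rightarrow> (vec \<Rightarrow> vec) \<Rightarrow> real" where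
  "MF m n \<Lambda> F = Sup ((\<lambda>\<eta>. vnorm m n (F \<eta>)) ` \<Lambda>)"

definition H0 :: "nat \<Rightarrow> nat \<Rightarrow> nat \<Rightarrow> (int \<Rightarrow> real) \<Rightarrow> nat \<Rightarrow> (nat \<times> nat \<Rightarrow> real)
    \<Rightarrow> (nat \<times> nat \<Rightarrow> nat \<times> nat \<Rightarrow> real) \<Rightarrow> (nat \<times> nat \<Rightarrow> real) \<Rightarrow> real
    \<Rightarrow> vec set \<Rightarrow> (vec \<Rightarrow> vec) \<Rightarrow> real" where
  "H0 m n r \<theta> p a C K Mf \<Lambda> F =
     MF m n \<Lambda> F / (1 - Mf * cbar m n r \<theta> p a C K)
       * Max ((\<lambda>c. coefK \<theta> p (a c) (K c)) ` cells m n)"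

definition in_Theta :: "vec set \<Rightarrow> (vec \<Rightarrow> vec) \<Rightarrow> (int \<Rightarrow> vec) \<Rightarrow> bool" where
  "in_Theta \<Lambda> F \<zeta> = (\<forall>k. \<zeta> k \<in> \<Lambda> \<and> \<zeta> (k + 1) = F (\<zeta> k))"

definition is_solution :: "nat \<Rightarrow> nat \<Rightarrow> nat \<Rightarrow> (nat \<times> nat \<Rightarrow> real)
    \<Rightarrow> (nat \<times> nat \<Rightarrow> nat \<times> nat \<Rightarrow> real) \<Rightarrow> (real \<Rightarrow> real) \<Rightarrow> (int \<Rightarrow> real)
    \<Rightarrow> (int \<Rightarrow> vec) \<Rightarrow> (real \<Rightarrow> vec) \<Rightarrow> bool" where
  "is_solution m n r a C f \<theta> \<zeta> x =
    (\<forall>k::int. \<forall>c\<in>cells m n.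
       continuous_on {\<theta> (2*k - 1) .. \<theta> (2*k)} (\<lambda>t. x t c)
     \<and> (\<forall>t\<in>{\<theta> (2*k - 1) .. \<theta> (2*k)}.
          ((\<lambda>t. x t c) has_real_derivative
             (- a c * x t c - (\<Sum>hl\<in>nbhd m n r c. C c hl * f (x t hl) * x t c) + \<zeta> k c))
          (at t within {\<theta> (2*k - 1) .. \<theta> (2*k)}))
     \<and> x (\<theta> (2*k + 1)) c =
          (1 - dlt \<theta> k * a c) * x (\<theta> (2*k)) c
          - dlt \<theta> k * (\<Sum>hl\<in>nbhd m n r c. C c hl * f (x (\<theta> (2*k)) hl) * x (\<theta> (2*k)) c)
          + dlt \<theta> k * \<zeta> k c)"

end

theory Submission
  imports Defs
begin


lemma theta_shift_nat:
  assumes per: "\<forall>k. \<theta> (k + 2 * int p) = \<theta> k + \<omega>"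
  shows "\<theta> (k + 2 * int p * int N) = \<theta> k + real N * \<omega>"
proof (induction N)
  case 0 then show ?case by simp
next
  case (Suc N)
  have "\<theta> (k + 2 * int p * int (Suc N)) = \<theta> ((k + 2 * int p * int N) + 2 * int p)"
    by (simp add: algebra_simps)
  also have "\<dots> = \<theta> k + real N * \<omega> + \<omega>" using per Suc by simp
  finally show ?case by (simp add: algebra_simps)
qed

lemma theta_shift_int:
  assumes per: "\<forall>k. \<theta> (k + 2 * int p) = \<theta> k + \<omega>"
  shows "\<theta> (k + 2 * int p * q) = \<theta> k + real_of_int q * \<omega>"
proof (cases "q \<ge> 0")
  case True
  then obtain N where "q = int N" by (metis nonneg_eq_int)
  then show ?thesis using theta_shift_nat[OF per, of k N] by simp
next
  case False
  then have "- q \<ge> 0" by simp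
  then obtain N where "- q = int N" by (metis nonneg_eq_int)
  then have N: "q = - int N" by simp
  have "\<theta> ((k + 2 * int p * q) + 2 * int p * int N) = \<theta> (k + 2 * int p * q) + real N * \<omega>"
    by (rule theta_shift_nat[OF per])
  then show ?thesis using N by (simp add: algebra_simps)
qed

lemma theta_pos_iff:
  assumes mono: "strict_mono \<theta>" and t0: "\<theta> (-1) < 0" "0 < (\<theta>::int\<Rightarrow>real) 0"
  shows "0 < \<theta> (2*j) \<longleftrightarrow> 0 \<le> j"
proof
  assume "0 < \<theta> (2*j)"
  show "0 \<le> j"
  proof (rule ccontr)
    assume "\<not> 0 \<le> j"
    then have "2*j < -1" by simp
    then have "\<theta> (2*j) < \<theta> (-1)" using mono by (simp add: strict_mono_less)
    with t0 \<open>0 < \<theta> (2*j)\<close> show False by simp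
  qed
next
  assume "0 \<le> j"
  then have "\<theta> 0 \<le> \<theta> (2*j)" using mono by (simp add: strict_mono_less_eq)
  with t0 show "0 < \<theta> (2*j)" by simp
qed

lemma sk_pos:
  assumes mono: "strict_mono \<theta>" and t0: "\<theta> (-1) < 0" "0 < (\<theta>::int\<Rightarrow>real) 0" and k: "0 \<le> k"
  shows "sk \<theta> k = \<theta> (2*k) - (\<Sum>j\<in>{0..<k}. dlt \<theta> j)"
proof -
  have pos: "0 \<le> \<theta> (2*k)" using theta_pos_iff[OF mono t0, of k] k by simp
  have iff: "(0 < \<theta> (2*j) \<and> \<theta> (2*j) < \<theta> (2*k)) = (j \<in> {0..<k})" for j
  proof -
    have "(\<theta> (2*j) < \<theta> (2*k)) = (2*j < 2*k)" by (rule strict_mono_less[OF mono])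
    then show ?thesis using theta_pos_iff[OF mono t0, of j] by auto
  qed
  have "{j. 0 < \<theta> (2*j) \<and> \<theta> (2*j) < \<theta> (2*k)} = {0..<k}"
    by (simp only: iff Collect_mem_eq)
  then show ?thesis unfolding sk_def psi_def using pos by simp
qed

lemma sk_neg:
  assumes mono: "strict_mono \<theta>" and t0: "\<theta> (-1) < 0" "0 < (\<theta>::int\<Rightarrow>real) 0" and k: "k < 0"
  shows "sk \<theta> k = \<theta> (2*k) + (\<Sum>j\<in>{k..-1}. dlt \<theta> j)"
proof -
  have "2*k < -1" using k by simp
  then have "\<theta> (2*k) < \<theta> (-1)" using mono by (simp add: strict_mono_less)
  then have neg: "\<not> 0 \<le> \<theta> (2*k)" using t0 by simp
  have "{j. \<theta> (2*k) \<le> \<theta> (2*j) \<and> \<theta> (2*j) < 0} = {k..-1}"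
  proof -
    have "\<theta> (2*j) < 0 \<longleftrightarrow> j < 0" for j
    proof
      assume "\<theta> (2*j) < 0" then show "j < 0" using theta_pos_iff[OF mono t0, of j] by linarith
    next
      assume "j < 0" then have "2*j < -1" by simp
      then have "\<theta> (2*j) < \<theta> (-1)" using mono by (simp add: strict_mono_less)
      then show "\<theta> (2*j) < 0" using t0 by simp
    qed
    moreover have "\<theta> (2*k) \<le> \<theta> (2*j) \<longleftrightarrow> k \<le> j" for j using mono by (simp add: strict_mono_less_eq)
    ultimately show ?thesis by auto
  qed
  then show ?thesis unfolding sk_def psi_def using neg by simp
qed

lemma sk_step:
  assumes mono: "strict_mono \<theta>" and t0: "\<theta> (-1) < 0" "0 < (\<theta>::int\<Rightarrow>real) 0"
  shows "sk \<theta> j - sk \<theta> (j-1) = \<theta> (2*j) - \<theta> (2*j-1)"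
proof -
  consider "j \<ge> 1" | "j = 0" | "j \<le> -1" by linarith
  then show ?thesis
  proof cases
    case 1
    have e: "{0..<j} = insert (j-1) {0..<j-1}" using 1 by auto
    have "(\<Sum>i\<in>{0..<j}. dlt \<theta> i) = dlt \<theta> (j-1) + (\<Sum>i\<in>{0..<j-1}. dlt \<theta> i)"
      unfolding e by (subst sum.insert) auto
    then show ?thesis using sk_pos[OF mono t0, of j] sk_pos[OF mono t0, of "j-1"] 1
      by (simp add: dlt_def algebra_simps)
  next
    case 2
    then show ?thesis using sk_pos[OF mono t0, of 0] sk_neg[OF mono t0, of "-1"]
      by (simp add: dlt_def)
  next
    case 3
    have e: "{j-1..-1} = insert (j-1) {j..-1}" using 3 by auto
    have "(\<Sum>i\<in>{j-1..-1}. dlt \<theta> i) = dlt \<theta> (j-1) + (\<Sum>i\<in>{j..-1}. dlt \<theta> i)"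
      unfolding e by (subst sum.insert) auto
    then show ?thesis using sk_neg[OF mono t0, of j] sk_neg[OF mono t0, of "j-1"] 3
      by (simp add: dlt_def algebra_simps)
  qed
qed




lemma step_mono:
  fixes s :: "int \<Rightarrow> real"
  assumes "\<And>j. s (j-1) < s j"
  shows "strict_mono s"
proof -
  have step: "s j < s (j+1)" for j using assms[of "j+1"] by simp
  have H: "\<forall>j. s j < s (j + int N + 1)" for N
  proof (induction N)
    case 0 then show ?case using step by simp
  next
    case (Suc N)
    show ?case
    proof
      fix j
      have e: "j + int (Suc N) + 1 = (j+1) + int N + 1" by simp
      have "s (j+1) < s ((j+1) + int N + 1)" using Suc by blast
      then show "s j < s (j + int (Suc N) + 1)" unfolding e using step[of j] by linarith
    qed
  qed
  show ?thesis unfolding strict_mono_def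
  proof (intro allI impI)
    fix a b :: int assume ab: "a < b"
    have e: "a + int (nat (b - a - 1)) + 1 = b" using ab by simp
    have "s a < s (a + int (nat (b - a - 1)) + 1)" using H by blast
    then show "s a < s b" unfolding e .
  qed
qed

lemma sk_mono:
  assumes mono: "strict_mono \<theta>" and t0: "\<theta> (-1) < 0" "0 < (\<theta>::int\<Rightarrow>real) 0"
  shows "strict_mono (sk \<theta>)"
proof (rule step_mono)
  fix j
  have "\<theta> (2*j-1) < \<theta> (2*j)" using mono by (simp add: strict_mono_less)
  then show "sk \<theta> (j-1) < sk \<theta> j" using sk_step[OF mono t0, of j] by simp
qed

lemma eta_per:
  fixes \<theta> :: "int \<Rightarrow> real"
  assumes per: "\<forall>k. \<theta> (k + 2 * int p) = \<theta> k + \<omega>"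
  shows "\<theta> (2*(j + int p)) - \<theta> (2*(j + int p) - 1) = \<theta> (2*j) - \<theta> (2*j-1)"
proof -
  have e1: "2*(j + int p) = 2*j + 2 * int p" and e2: "2*(j + int p) - 1 = (2*j-1) + 2 * int p" by simp_all
  have "\<theta> (2*(j + int p)) = \<theta> (2*j) + \<omega>" unfolding e1 using per by blast
  moreover have "\<theta> (2*(j + int p) - 1) = \<theta> (2*j - 1) + \<omega>" unfolding e2 using per by blast
  ultimately show ?thesis by simp
qed

lemma sk_tele:
  assumes mono: "strict_mono \<theta>" and t0: "\<theta> (-1) < 0" "0 < (\<theta>::int\<Rightarrow>real) 0"
  shows "sk \<theta> (int N) - sk \<theta> 0 = (\<Sum>k\<in>{1..int N}. eta \<theta> k)"
proof (induction N)
  case 0 then show ?case by simp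
next
  case (Suc N)
  have e: "{1..int (Suc N)} = insert (int N + 1) {1..int N}" by auto
  have "(\<Sum>k\<in>{1..int (Suc N)}. eta \<theta> k) = eta \<theta> (int N + 1) + (\<Sum>k\<in>{1..int N}. eta \<theta> k)"
    unfolding e by (subst sum.insert) auto
  moreover have "sk \<theta> (int N + 1) - sk \<theta> (int N) = eta \<theta> (int N + 1)"
    using sk_step[OF mono t0, of "int N + 1"] by (simp add: eta_def)
  ultimately show ?case using Suc unfolding of_nat_Suc by (simp only: add.commute)
qed

lemma sk_per:
  assumes mono: "strict_mono \<theta>" and t0: "\<theta> (-1) < 0" "0 < (\<theta>::int\<Rightarrow>real) 0"
    and per: "\<forall>k. \<theta> (k + 2 * int p) = \<theta> k + \<omega>"
  shows "sk \<theta> (j + int p) = sk \<theta> j + psi_om \<theta> p"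
proof -
  define g where "g j = sk \<theta> (j + int p) - sk \<theta> j" for j
  have gs: "g (i+1) = g i" for i
  proof -
    have "sk \<theta> (i + 1 + int p) - sk \<theta> (i + int p) = sk \<theta> (i+1) - sk \<theta> i"
      using sk_step[OF mono t0, of "i + 1 + int p"] sk_step[OF mono t0, of "i + 1"]
        eta_per[OF per, of "i+1"] by (simp add: algebra_simps)
    then show ?thesis unfolding g_def by simp
  qed
  have "g i = g 0" for i
  proof (induction i rule: int_induct[where k=0])
    case base then show ?case by simp
  next
    case (step1 i) then show ?case using gs[of i] by simp
  next
    case (step2 i) then show ?case using gs[of "i-1"] by simp
  qed
  moreover have "g 0 = psi_om \<theta> p" unfolding g_def psi_om_def using sk_tele[OF mono t0, of p] by simp
  ultimately have "g j = psi_om \<theta> p" by simp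
  then show ?thesis unfolding g_def by simp
qed

lemma psi_om_pos:
  assumes mono: "strict_mono \<theta>" and p: "p \<ge> 1"
  shows "psi_om \<theta> p > 0"
  unfolding psi_om_def eta_def
proof (rule sum_pos)
  show "finite {1..int p}" by simp
  show "{1..int p} \<noteq> {}" using p by simp
  fix i show "0 < \<theta> (2*i) - \<theta> (2*i-1)" using mono by (simp add: strict_mono_less)
qed

lemma uu_eq:
  assumes mono: "strict_mono \<theta>" and t0: "\<theta> (-1) < 0" "0 < (\<theta>::int\<Rightarrow>real) 0"
    and l: "sk \<theta> (l-1) < \<tau>" "\<tau> \<le> sk \<theta> l" and k: "sk \<theta> k < s" "s \<le> sk \<theta> (k+1)"
  shows "uu \<theta> a s \<tau> = exp (- a * (s - \<tau>)) * (\<Prod>\<nu>\<in>{l..k}. 1 - dlt \<theta> \<nu> * a)"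
proof -
  have sm: "strict_mono (sk \<theta>)" by (rule sk_mono[OF mono t0])
  have L: "(THE l. sk \<theta> (l - 1) < \<tau> \<and> \<tau> \<le> sk \<theta> l) = l"
  proof (rule the_equality)
    show "sk \<theta> (l - 1) < \<tau> \<and> \<tau> \<le> sk \<theta> l" using l by simp
    fix l' assume a: "sk \<theta> (l' - 1) < \<tau> \<and> \<tau> \<le> sk \<theta> l'"
    have "\<not> l \<le> l' - 1"
    proof
      assume "l \<le> l' - 1" then have "sk \<theta> l \<le> sk \<theta> (l'-1)" using strict_mono_less_eq[OF sm] by blast
      then show False using a l by linarith
    qed
    moreover have "\<not> l' \<le> l - 1"
    proof
      assume "l' \<le> l - 1" then have "sk \<theta> l' \<le> sk \<theta> (l-1)" using strict_mono_less_eq[OF sm] by blast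
      then show False using a l by linarith
    qed
    ultimately show "l' = l" by linarith
  qed
  have K: "(THE k. sk \<theta> k < s \<and> s \<le> sk \<theta> (k + 1)) = k"
  proof (rule the_equality)
    show "sk \<theta> k < s \<and> s \<le> sk \<theta> (k + 1)" using k by simp
    fix k' assume a: "sk \<theta> k' < s \<and> s \<le> sk \<theta> (k' + 1)"
    have "\<not> k + 1 \<le> k'"
    proof
      assume "k + 1 \<le> k'" then have "sk \<theta> (k+1) \<le> sk \<theta> k'" using strict_mono_less_eq[OF sm] by blast
      then show False using a k by linarith
    qed
    moreover have "\<not> k' + 1 \<le> k"
    proof
      assume "k' + 1 \<le> k" then have "sk \<theta> (k'+1) \<le> sk \<theta> k" using strict_mono_less_eq[OF sm] by blast
      then show False using a k by linarith
    qed
    ultimately show "k' = k" by linarith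
  qed
  show ?thesis unfolding uu_def Let_def L K ..
qed

lemma dlt_le_dmax:
  assumes mono: "strict_mono \<theta>" and per: "\<forall>k. \<theta> (k + 2 * int p) = \<theta> k + \<omega>" and p: "p \<ge> 1"
  shows "dlt \<theta> j \<le> dmax \<theta> p"
proof -
  define j' where "j' = (j - 1) mod int p + 1"
  define q where "q = (j - 1) div int p"
  have j: "j = j' + int p * q" unfolding j'_def q_def by simp
  have pp: "int p > 0" using p by simp
  have j'in: "j' \<in> {1..int p}" unfolding j'_def using pos_mod_sign[OF pp, of "j-1"] pos_mod_bound[OF pp, of "j-1"] by auto
  have "dlt \<theta> j = dlt \<theta> j'"
  proof -
    have "\<theta> (2*j+1) = \<theta> ((2*j'+1) + 2 * int p * q) " using j by (simp add: algebra_simps)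
    also have "\<dots> = \<theta> (2*j'+1) + real_of_int q * \<omega>" by (rule theta_shift_int[OF per])
    finally have 1: "\<theta> (2*j+1) = \<theta> (2*j'+1) + real_of_int q * \<omega>" .
    have "\<theta> (2*j) = \<theta> ((2*j') + 2 * int p * q) " using j by (simp add: algebra_simps)
    also have "\<dots> = \<theta> (2*j') + real_of_int q * \<omega>" by (rule theta_shift_int[OF per])
    finally have 2: "\<theta> (2*j) = \<theta> (2*j') + real_of_int q * \<omega>" .
    show ?thesis unfolding dlt_def using 1 2 by simp
  qed
  also have "\<dots> \<le> dmax \<theta> p" unfolding dmax_def using j'in by (intro Max_ge) auto
  finally show ?thesis .
qed

lemma dlt_pos:
  assumes mono: "strict_mono \<theta>" shows "dlt \<theta> j > 0"
  unfolding dlt_def using mono by (simp add: strict_mono_less)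




lemma right_limit_le:
  fixes F H :: "real \<Rightarrow> real"
  assumes "isCont F z" "isCont H z" "z < b" "\<forall>\<tau>\<in>{z<..<b}. F \<tau> \<le> H \<tau>"
  shows "F z \<le> H z"
proof -
  have tF: "(F \<longlongrightarrow> F z) (at_right z)" using assms(1) filterlim_at_split isCont_def by blast
  have tH: "(H \<longlongrightarrow> H z) (at_right z)" using assms(2) filterlim_at_split isCont_def by blast
  have ev: "eventually (\<lambda>\<tau>. F \<tau> \<le> H \<tau>) (at_right z)"
    using eventually_at_right_real[OF assms(3)] by (rule eventually_mono) (use assms(4) in auto)
  show ?thesis by (rule tendsto_le[OF trivial_limit_at_right_real tH tF ev])
qed

lemma left_end_bound:
  fixes h :: "real \<Rightarrow> real"
  assumes "continuous_on {a..b} h" "a < b" "\<forall>t\<in>{a<..b}. \<bar>h t\<bar> \<le> M"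
  shows "\<bar>h a\<bar> \<le> M"
proof -
  have "((\<lambda>t. \<bar>h t\<bar>) \<longlongrightarrow> \<bar>h a\<bar>) (at a within {a..b})"
    using assms(1) assms(2) by (intro tendsto_rabs) (auto simp: continuous_on_def)
  then have t: "((\<lambda>t. \<bar>h t\<bar>) \<longlongrightarrow> \<bar>h a\<bar>) (at_right a)"
    using at_within_Icc_at_right[OF assms(2)] by simp
  have ev: "eventually (\<lambda>t. \<bar>h t\<bar> \<le> M) (at_right a)"
    using eventually_at_right_real[OF assms(2)] by (rule eventually_mono) (use assms(3) in auto)
  show ?thesis by (rule tendsto_le[OF trivial_limit_at_right_real tendsto_const t ev])
qed

lemma geo_limit:
  fixes X Y c q :: real
  assumes "\<forall>M\<ge>1. X \<le> Y + c * q ^ M" "c \<ge> 0" "0 \<le> q" "q < 1"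
  shows "X \<le> Y"
proof (rule ccontr)
  assume "\<not> X \<le> Y"
  then have pos: "(X - Y) / (c + 1) > 0" using assms by simp
  obtain n where n: "q ^ n < (X - Y) / (c + 1)" using real_arch_pow_inv[OF pos assms(4)] by blast
  have "q ^ (Suc n) \<le> q ^ n" using assms by (simp add: mult_left_le_one_le)
  then have "c * q ^ Suc n \<le> c * ((X - Y) / (c+1))" using n assms(2) by (intro mult_left_mono) auto
  also have "\<dots> < X - Y"
  proof -
    define z where "z = (X - Y) / (c+1)"
    have "(c+1) * z = c * z + z" by (simp add: distrib_right)
    then have "c * z < (c + 1) * z" using pos unfolding z_def by linarith
    then have "c * ((X - Y) / (c+1)) < (c + 1) * ((X - Y) / (c+1))" unfolding z_def .
    also have "\<dots> = X - Y" using assms(2) by simp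
    finally show ?thesis .
  qed
  finally show False using assms(1)[rule_format, of "Suc n"] by simp
qed

lemma block_sum:
  fixes q :: real
  assumes "p \<ge> 1"
  shows "(\<Sum>i<M*p. q ^ (i div p)) = real p * (\<Sum>j<M. q ^ j)"
proof (induction M)
  case 0 then show ?case by simp
next
  case (Suc M)
  have "(\<Sum>i<Suc M * p. q ^ (i div p)) = (\<Sum>i<M*p. q ^ (i div p)) + (\<Sum>i\<in>{M*p..<M*p+p}. q ^ (i div p))"
    by (simp add: sum.atLeastLessThan_concat[symmetric] lessThan_atLeast0 add.commute)
  also have "(\<Sum>i\<in>{M*p..<M*p+p}. q ^ (i div p)) = (\<Sum>i\<in>{M*p..<M*p+p}. q ^ M)"
  proof (rule sum.cong)
    fix i assume "i \<in> {M*p..<M*p+p}"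
    then have "i div p = M" by (intro div_nat_eqI) (auto simp: algebra_simps)
    then show "q ^ (i div p) = q ^ M" by simp
  qed simp
  also have "\<dots> = real p * q ^ M" by simp
  finally show ?case using Suc by (simp add: algebra_simps)
qed




locale core =
  fixes \<theta> :: "int \<Rightarrow> real" and s :: "int \<Rightarrow> real" and a lm K W \<delta>m G B :: real
    and p :: nat and d g :: "real \<Rightarrow> real"
  assumes mono: "strict_mono \<theta>"
    and sstep: "\<And>j. s j - s (j-1) = \<theta> (2*j) - \<theta> (2*j-1)"
    and sper: "\<And>j. s (j + int p) = s j + W"
    and Wpos: "W > 0" and ppos: "p \<ge> 1" and apos: "a > 0" and lmpos: "lm > 0"
    and ub: "\<And>l k \<tau> \<sigma>. s (l-1) < \<tau> \<Longrightarrow> \<tau> \<le> s l \<Longrightarrow> s k < \<sigma> \<Longrightarrow> \<sigma> \<le> s (k+1) \<Longrightarrow> \<tau> \<le> \<sigma> \<Longrightarrow>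
       \<bar>exp (- a * (\<sigma> - \<tau>)) * (\<Prod>\<nu>\<in>{l..k}. 1 - dlt \<theta> \<nu> * a)\<bar> \<le> K * exp (- lm * (\<sigma> - \<tau>))"
    and dlm: "\<And>j. dlt \<theta> j \<le> \<delta>m"
    and dcont: "\<And>j. continuous_on {\<theta> (2*j-1)..\<theta> (2*j)} d"
    and dder: "\<And>j t. t \<in> {\<theta> (2*j-1)..\<theta> (2*j)} \<Longrightarrow>
        (d has_real_derivative (- a * d t + g t)) (at t within {\<theta> (2*j-1)..\<theta> (2*j)})"
    and djump: "\<And>j. d (\<theta> (2*j+1)) = (1 - dlt \<theta> j * a) * d (\<theta> (2*j)) + dlt \<theta> j * g (\<theta> (2*j))"
    and gbd: "\<And>j t. t \<in> {\<theta> (2*j-1)..\<theta> (2*j)} \<Longrightarrow> \<bar>g t\<bar> \<le> G"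
    and dbd: "\<And>j t. t \<in> {\<theta> (2*j-1)..\<theta> (2*j)} \<Longrightarrow> \<bar>d t\<bar> \<le> B"
begin

lemma smono: "strict_mono s"
proof (rule step_mono)
  fix j
  have "\<theta> (2*j-1) < \<theta> (2*j)" using mono by (simp add: strict_mono_less)
  then show "s (j-1) < s j" using sstep[of j] by simp
qed

lemma sper_iter: "s (j - int p * int M) = s j - real M * W"
proof (induction M)
  case 0 then show ?case by simp
next
  case (Suc M)
  have "s (j - int p * int (Suc M)) + W = s ((j - int p * int (Suc M)) + int p)" using sper by simp
  also have "(j - int p * int (Suc M)) + int p = j - int p * int M" by (simp add: algebra_simps)
  finally show ?case using Suc by (simp add: algebra_simps)
qed

lemma Knn: "K \<ge> 0"
proof -
  have "s (0-1) < s 0" using smono by (simp add: strict_mono_less)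
  then have "\<bar>exp (- a * (s 0 - s 0)) * (\<Prod>\<nu>\<in>{0..-1}. 1 - dlt \<theta> \<nu> * a)\<bar> \<le> K * exp (- lm * (s 0 - s 0))"
    by (intro ub) auto
  then show ?thesis by simp
qed

end

locale core_pt = core +
  fixes k :: int and t :: real
  assumes tk: "\<theta> (2*k-1) < t" "t \<le> \<theta> (2*k)"
begin

definition ss where "ss = s k - (\<theta> (2*k) - t)"
definition tau where "tau j \<sigma> = s j - (\<theta> (2*j) - \<sigma>)" for j \<sigma>
definition Pr where "Pr j = (\<Prod>\<nu>\<in>{j..k-1}. 1 - dlt \<theta> \<nu> * a)" for j
definition Phi where "Phi j \<sigma> = Pr j * (exp (- a * (ss - tau j \<sigma>)) * d \<sigma>)" for j \<sigma>
definition E where "E j \<sigma> = G * K * exp (- lm * (ss - tau j \<sigma>)) / lm" for j \<sigma>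

lemma Gnn: "G \<ge> 0" using gbd[of t k] tk by force
lemma Bnn: "B \<ge> 0" using dbd[of t k] tk by force

lemma ss_bounds: "s (k-1) < ss" "ss \<le> s k"
  using sstep[of k] tk unfolding ss_def by auto

lemma tau_top: "tau j (\<theta> (2*j)) = s j" unfolding tau_def by simp
lemma tau_bot: "tau j (\<theta> (2*j-1)) = s (j-1)" unfolding tau_def using sstep[of j] by simp
lemma tau_jump: "tau (j+1) (\<theta> (2*j+1)) = s j"
  unfolding tau_def using sstep[of "j+1"] by (simp add: algebra_simps)
lemma tau_t: "tau k t = ss" unfolding tau_def ss_def by simp

lemma Pr_k: "Pr k = 1" unfolding Pr_def by simp
lemma Pr_step: "j \<le> k - 1 \<Longrightarrow> Pr j = (1 - dlt \<theta> j * a) * Pr (j+1)"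
proof -
  assume "j \<le> k - 1"
  then have e: "{j..k-1} = insert j {j+1..k-1}" by auto
  show ?thesis unfolding Pr_def e by (subst prod.insert) auto
qed

lemma kern:
  assumes "j \<le> k" "\<theta> (2*j-1) < \<sigma>" "\<sigma> \<le> \<theta> (2*j)" "tau j \<sigma> \<le> ss"
  shows "\<bar>Pr j * exp (- a * (ss - tau j \<sigma>))\<bar> \<le> K * exp (- lm * (ss - tau j \<sigma>))"
proof -
  have "\<bar>exp (- a * (ss - tau j \<sigma>)) * (\<Prod>\<nu>\<in>{j..k-1}. 1 - dlt \<theta> \<nu> * a)\<bar> \<le> K * exp (- lm * (ss - tau j \<sigma>))"
  proof (rule ub)
    show "s (j - 1) < tau j \<sigma>" unfolding tau_def using sstep[of j] assms by simp
    show "tau j \<sigma> \<le> s j" unfolding tau_def using assms by simp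
    show "s (k-1) < ss" by (rule ss_bounds)
    show "ss \<le> s (k - 1 + 1)" using ss_bounds by simp
    show "tau j \<sigma> \<le> ss" by (rule assms)
  qed
  then show ?thesis unfolding Pr_def by (simp add: mult.commute)
qed

lemma stepA:
  assumes j: "j \<le> k" and u: "\<theta> (2*j-1) \<le> u" "u \<le> \<theta> (2*j)" "tau j u \<le> ss"
  shows "\<bar>Phi j u - Phi j (\<theta> (2*j-1))\<bar> \<le> E j u - E j (\<theta> (2*j-1))"
proof -
  let ?a0 = "\<theta> (2*j-1)"
  define ex where "ex \<sigma> = exp (- a * (ss - tau j \<sigma>))" for \<sigma>
  define el where "el \<sigma> = exp (- lm * (ss - tau j \<sigma>))" for \<sigma>
  have Phi_eq: "Phi j \<sigma> = Pr j * (ex \<sigma> * d \<sigma>)" for \<sigma> unfolding Phi_def ex_def ..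
  have E_eq: "E j \<sigma> = G * K * el \<sigma> / lm" for \<sigma> unfolding E_def el_def ..
  have derivs: "(Phi j has_real_derivative Pr j * ex \<sigma> * g \<sigma>) (at \<sigma>)
      \<and> (E j has_real_derivative G * K * el \<sigma>) (at \<sigma>)"
    if \<sigma>: "?a0 < \<sigma>" "\<sigma> < u" for \<sigma>
  proof
    have "\<sigma> \<in> {?a0..\<theta> (2*j)}" using \<sigma> u by auto
    from dder[OF this] have dd: "(d has_real_derivative (- a * d \<sigma> + g \<sigma>)) (at \<sigma>)"
      using at_within_Icc_at[of ?a0 \<sigma> "\<theta> (2*j)"] \<sigma> u by simp
    have ex': "(ex has_real_derivative ex \<sigma> * a) (at \<sigma>)"
      unfolding ex_def tau_def by (auto intro!: derivative_eq_intros)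
    have "((\<lambda>\<sigma>. ex \<sigma> * d \<sigma>) has_real_derivative ex \<sigma> * a * d \<sigma> + (- a * d \<sigma> + g \<sigma>) * ex \<sigma>) (at \<sigma>)"
      by (rule DERIV_mult[OF ex' dd])
    then have "((\<lambda>\<sigma>. Pr j * (ex \<sigma> * d \<sigma>)) has_real_derivative Pr j * (ex \<sigma> * a * d \<sigma> + (- a * d \<sigma> + g \<sigma>) * ex \<sigma>)) (at \<sigma>)"
      by (rule DERIV_cmult)
    then show "(Phi j has_real_derivative Pr j * ex \<sigma> * g \<sigma>) (at \<sigma>)"
      unfolding Phi_eq[abs_def] by (rule DERIV_cong) (simp add: algebra_simps)
    have el': "(el has_real_derivative el \<sigma> * lm) (at \<sigma>)"
      unfolding el_def tau_def by (auto intro!: derivative_eq_intros)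
    have "((\<lambda>\<sigma>. G * K * el \<sigma> / lm) has_real_derivative G * K * (el \<sigma> * lm) / lm) (at \<sigma>)"
      by (intro DERIV_cdivide DERIV_cmult el')
    then show "(E j has_real_derivative G * K * el \<sigma>) (at \<sigma>)"
      unfolding E_eq[abs_def] by (rule DERIV_cong) (use lmpos in simp)
  qed
  have dbound: "\<bar>Pr j * ex \<sigma> * g \<sigma>\<bar> \<le> G * K * el \<sigma>" if \<sigma>: "?a0 < \<sigma>" "\<sigma> < u" for \<sigma>
  proof -
    have "tau j \<sigma> \<le> tau j u" unfolding tau_def using \<sigma> by simp
    then have k1: "\<bar>Pr j * ex \<sigma>\<bar> \<le> K * el \<sigma>" unfolding ex_def el_def
      using kern[OF j \<sigma>(1)] \<sigma> u by simp
    have g1: "\<bar>g \<sigma>\<bar> \<le> G" using gbd[of \<sigma> j] \<sigma> u by simp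
    have "\<bar>Pr j * ex \<sigma> * g \<sigma>\<bar> = \<bar>Pr j * ex \<sigma>\<bar> * \<bar>g \<sigma>\<bar>" by (simp add: abs_mult)
    also have "\<dots> \<le> (K * el \<sigma>) * G" using k1 g1 by (intro mult_mono) auto
    finally show ?thesis by (simp add: algebra_simps)
  qed
  have cont: "continuous_on {?a0..u} (Phi j)" "continuous_on {?a0..u} (E j)"
  proof -
    have dc: "continuous_on {?a0..u} d" by (rule continuous_on_subset[OF dcont[of j]]) (use u in auto)
    show "continuous_on {?a0..u} (Phi j)" unfolding Phi_def tau_def by (intro continuous_intros dc)
    show "continuous_on {?a0..u} (E j)" unfolding E_def tau_def by (intro continuous_intros) (use lmpos in auto)
  qed
  have h1: "(\<lambda>\<sigma>. Phi j \<sigma> - E j \<sigma>) u \<le> (\<lambda>\<sigma>. Phi j \<sigma> - E j \<sigma>) ?a0"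
  proof (rule DERIV_nonpos_imp_decreasing_open[OF u(1)])
    fix \<sigma> assume \<sigma>: "?a0 < \<sigma>" "\<sigma> < u"
    show "\<exists>y. ((\<lambda>\<sigma>. Phi j \<sigma> - E j \<sigma>) has_real_derivative y) (at \<sigma>) \<and> y \<le> 0"
    proof (intro exI conjI)
      show "((\<lambda>\<sigma>. Phi j \<sigma> - E j \<sigma>) has_real_derivative (Pr j * ex \<sigma> * g \<sigma> - G * K * el \<sigma>)) (at \<sigma>)"
        using derivs[OF \<sigma>] by (intro DERIV_diff) auto
      show "Pr j * ex \<sigma> * g \<sigma> - G * K * el \<sigma> \<le> 0" using dbound[OF \<sigma>] by linarith
    qed
  next
    show "continuous_on {?a0..u} (\<lambda>\<sigma>. Phi j \<sigma> - E j \<sigma>)" using cont by (intro continuous_intros)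
  qed
  have h2: "(\<lambda>\<sigma>. Phi j \<sigma> + E j \<sigma>) ?a0 \<le> (\<lambda>\<sigma>. Phi j \<sigma> + E j \<sigma>) u"
  proof (rule DERIV_nonneg_imp_increasing_open[OF u(1)])
    fix \<sigma> assume \<sigma>: "?a0 < \<sigma>" "\<sigma> < u"
    show "\<exists>y. ((\<lambda>\<sigma>. Phi j \<sigma> + E j \<sigma>) has_real_derivative y) (at \<sigma>) \<and> y \<ge> 0"
    proof (intro exI conjI)
      show "((\<lambda>\<sigma>. Phi j \<sigma> + E j \<sigma>) has_real_derivative (Pr j * ex \<sigma> * g \<sigma> + G * K * el \<sigma>)) (at \<sigma>)"
        using derivs[OF \<sigma>] by (intro DERIV_add) auto
      show "Pr j * ex \<sigma> * g \<sigma> + G * K * el \<sigma> \<ge> 0" using dbound[OF \<sigma>] by linarith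
    qed
  next
    show "continuous_on {?a0..u} (\<lambda>\<sigma>. Phi j \<sigma> + E j \<sigma>)" using cont by (intro continuous_intros)
  qed
  from h1 h2 show ?thesis by simp
qed

end



context core_pt
begin

lemma s_le_ss: "j \<le> k - 1 \<Longrightarrow> s j < ss"
proof -
  assume "j \<le> k - 1"
  then have "s j \<le> s (k-1)" using smono by (simp add: strict_mono_less_eq)
  then show ?thesis using ss_bounds by linarith
qed

lemma stepB:
  assumes jk: "j + 1 \<le> k"
  shows "\<bar>Phi (j+1) (\<theta> (2*j+1)) - Phi j (\<theta> (2*j))\<bar> \<le> \<delta>m * G * K * exp (- lm * (ss - s j))"
proof -
  define e where "e = exp (- a * (ss - s j))"
  have sj: "s j < ss" using s_le_ss jk by simp
  have lim: "\<bar>Pr (j+1) * e\<bar> \<le> K * exp (- lm * (ss - s j))"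
  proof -
    define F where "F \<tau> = \<bar>Pr (j+1) * exp (- a * (ss - \<tau>))\<bar>" for \<tau>
    define H where "H \<tau> = K * exp (- lm * (ss - \<tau>))" for \<tau>
    have "F (s j) \<le> H (s j)"
    proof (rule right_limit_le[where F=F and H=H and z="s j" and b="min (s (j+1)) ss"])
      show "isCont F (s j)" unfolding F_def by (intro continuous_intros)
      show "isCont H (s j)" unfolding H_def by (intro continuous_intros)
      have "s j < s (j+1)" using smono by (simp add: strict_mono_less)
      then show "s j < min (s (j+1)) ss" using sj by simp
      show "\<forall>\<tau>\<in>{s j<..<min (s (j + 1)) ss}. F \<tau> \<le> H \<tau>"
      proof
        fix \<tau> assume \<tau>: "\<tau> \<in> {s j<..<min (s (j + 1)) ss}"
        have "\<bar>exp (- a * (ss - \<tau>)) * (\<Prod>\<nu>\<in>{j+1..k-1}. 1 - dlt \<theta> \<nu> * a)\<bar> \<le> K * exp (- lm * (ss - \<tau>))"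
        proof (rule ub)
          show "s (j + 1 - 1) < \<tau>" using \<tau> by simp
          show "\<tau> \<le> s (j+1)" using \<tau> by simp
          show "s (k-1) < ss" by (rule ss_bounds)
          show "ss \<le> s (k - 1 + 1)" using ss_bounds by simp
          show "\<tau> \<le> ss" using \<tau> by simp
        qed
        then show "F \<tau> \<le> H \<tau>" unfolding Pr_def F_def H_def by (simp add: mult.commute)
      qed
    qed
    then show ?thesis unfolding e_def F_def H_def by simp
  qed
  have P1: "Phi (j+1) (\<theta> (2*j+1)) = Pr (j+1) * (e * d (\<theta> (2*j+1)))"
    unfolding Phi_def tau_jump e_def ..
  have P2: "Phi j (\<theta> (2*j)) = (1 - dlt \<theta> j * a) * Pr (j+1) * (e * d (\<theta> (2*j)))"
    unfolding Phi_def tau_top e_def using Pr_step[of j] jk by simp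
  have diff: "Phi (j+1) (\<theta> (2*j+1)) - Phi j (\<theta> (2*j)) = (Pr (j+1) * e) * (dlt \<theta> j * g (\<theta> (2*j)))"
    unfolding P1 P2 djump by (simp add: algebra_simps)
  have dpos: "0 < dlt \<theta> j" by (rule dlt_pos[OF mono])
  have g1: "\<bar>g (\<theta> (2*j))\<bar> \<le> G" using gbd[of "\<theta> (2*j)" j] mono by (simp add: strict_mono_less_eq)
  have "\<bar>dlt \<theta> j * g (\<theta> (2*j))\<bar> \<le> \<delta>m * G"
    using dpos dlm[of j] g1 by (simp add: abs_mult) (intro mult_mono, auto)
  then have "\<bar>(Pr (j+1) * e) * (dlt \<theta> j * g (\<theta> (2*j)))\<bar> \<le> (K * exp (- lm * (ss - s j))) * (\<delta>m * G)"
    unfolding abs_mult[of "Pr (j+1) * e"] using lim by (intro mult_mono) (auto simp: Knn)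
  then show ?thesis unfolding diff by (simp add: algebra_simps)
qed

lemma stepC:
  "\<bar>d t\<bar> \<le> \<bar>Phi (k - int N) (\<theta> (2*(k - int N) - 1))\<bar>
      + G * K / lm * (1 - exp (- lm * (ss - s (k - int N - 1))))
      + \<delta>m * G * K * (\<Sum>i<N. exp (- lm * (ss - s (k - 1 - int i))))"
proof (induction N)
  case 0
  have "Phi k t = d t" unfolding Phi_def Pr_k tau_t by simp
  moreover have "\<bar>Phi k t - Phi k (\<theta> (2*k-1))\<bar> \<le> E k t - E k (\<theta> (2*k-1))"
    using stepA[of k t] tk tau_t by simp
  moreover have "E k t = G * K / lm" unfolding E_def tau_t by simp
  moreover have "E k (\<theta> (2*k-1)) = G * K * exp (- lm * (ss - s (k-1))) / lm" unfolding E_def tau_bot ..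
  moreover have "G * K / lm * (1 - exp (- lm * (ss - s (k-1)))) = G * K / lm - G * K * exp (- lm * (ss - s (k-1))) / lm"
    by (simp add: algebra_simps)
  ultimately show ?case by simp
next
  case (Suc N)
  define j where "j = k - int N - 1"
  have e1: "k - int (Suc N) = j" "2*(k - int N) - 1 = 2*j+1" "k - int N = j + 1" "k - int N - 1 = j"
     "k - 1 - int N = j" "k - int (Suc N) - 1 = j - 1"
    unfolding j_def by simp_all
  have e2: "2*(j+1)-1 = 2*j+1" "j+1-1 = j" by simp_all
  have jk: "j + 1 \<le> k" unfolding j_def by simp
  have B: "\<bar>Phi (j+1) (\<theta> (2*j+1))\<bar> \<le> \<bar>Phi j (\<theta> (2*j))\<bar> + \<delta>m * G * K * exp (- lm * (ss - s j))"
    using stepB[OF jk] by linarith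
  have "\<theta> (2*j-1) \<le> \<theta> (2*j)" using mono by (simp add: strict_mono_less_eq)
  moreover have "tau j (\<theta> (2*j)) \<le> ss" unfolding tau_top using s_le_ss[of j] jk by simp
  ultimately have A0: "\<bar>Phi j (\<theta> (2*j)) - Phi j (\<theta> (2*j-1))\<bar> \<le> E j (\<theta> (2*j)) - E j (\<theta> (2*j-1))"
    using stepA[of j "\<theta> (2*j)"] jk by simp
  have Et: "E j (\<theta> (2*j)) = G * K * exp (- lm * (ss - s j)) / lm" unfolding E_def tau_top ..
  have Eb: "E j (\<theta> (2*j-1)) = G * K * exp (- lm * (ss - s (j-1))) / lm" unfolding E_def tau_bot ..
  have IH: "\<bar>d t\<bar> \<le> \<bar>Phi (j+1) (\<theta> (2*j+1))\<bar> + G * K / lm * (1 - exp (- lm * (ss - s j)))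
      + \<delta>m * G * K * (\<Sum>i<N. exp (- lm * (ss - s (k - 1 - int i))))"
    using Suc unfolding e1 e2 .
  have alg1: "G * K / lm * (1 - exp (- lm * (ss - s j))) = G * K / lm - G * K * exp (- lm * (ss - s j)) / lm"
    by (simp add: algebra_simps)
  have alg2: "G * K / lm * (1 - exp (- lm * (ss - s (j-1)))) = G * K / lm - G * K * exp (- lm * (ss - s (j-1))) / lm"
    by (simp add: algebra_simps)
  have sumeq: "\<delta>m * G * K * (\<Sum>i<Suc N. exp (- lm * (ss - s (k - 1 - int i))))
     = \<delta>m * G * K * (\<Sum>i<N. exp (- lm * (ss - s (k - 1 - int i)))) + \<delta>m * G * K * exp (- lm * (ss - s j))"
  proof -
    have sum0: "(\<Sum>i<Suc N. exp (- lm * (ss - s (k - 1 - int i))))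
       = (\<Sum>i<N. exp (- lm * (ss - s (k - 1 - int i)))) + exp (- lm * (ss - s j))"
      using e1(5) by simp
    show ?thesis by (simp only: sum0 distrib_left)
  qed
  have A1: "\<bar>Phi j (\<theta> (2*j))\<bar> \<le> \<bar>Phi j (\<theta> (2*j-1))\<bar> + (G * K * exp (- lm * (ss - s j)) / lm - G * K * exp (- lm * (ss - s (j-1))) / lm)"
    using A0 unfolding Et Eb by linarith
  have "\<bar>d t\<bar> \<le> \<bar>Phi j (\<theta> (2*j-1))\<bar> + G * K / lm * (1 - exp (- lm * (ss - s (j-1))))
      + (\<delta>m * G * K * (\<Sum>i<N. exp (- lm * (ss - s (k - 1 - int i)))) + \<delta>m * G * K * exp (- lm * (ss - s j)))"
    using B A1 IH unfolding alg1 alg2 by linarith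
  then show ?case unfolding e1 sumeq .
qed

lemma tail:
  assumes N: "N \<ge> 1"
  shows "\<bar>Phi (k - int N) (\<theta> (2*(k - int N) - 1))\<bar> \<le> K * B * exp (- lm * (ss - s (k - int N)))"
proof -
  define j where "j = k - int N"
  have jk: "j \<le> k - 1" using N unfolding j_def by simp
  have sj: "s j \<le> ss" using s_le_ss[OF jk] by simp
  have P: "Phi j (\<theta> (2*j-1)) = (Pr j * exp (- a * (ss - s j))) * exp (- a * (s j - s (j-1))) * d (\<theta> (2*j-1))"
    unfolding Phi_def tau_bot by (simp add: exp_add[symmetric] algebra_simps)
  have "\<theta> (2*j-1) < \<theta> (2*j)" using mono by (simp add: strict_mono_less)
  then have k1: "\<bar>Pr j * exp (- a * (ss - s j))\<bar> \<le> K * exp (- lm * (ss - s j))"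
    using kern[of j "\<theta> (2*j)"] jk sj unfolding tau_top by simp
  have "s (j-1) < s j" using smono by (simp add: strict_mono_less)
  then have e2: "exp (- a * (s j - s (j-1))) \<le> 1" using apos by simp
  have d1: "\<bar>d (\<theta> (2*j-1))\<bar> \<le> B" using dbd[of "\<theta> (2*j-1)" j] mono by (simp add: strict_mono_less_eq)
  have "\<bar>Phi j (\<theta> (2*j-1))\<bar> = \<bar>Pr j * exp (- a * (ss - s j))\<bar> * exp (- a * (s j - s (j-1))) * \<bar>d (\<theta> (2*j-1))\<bar>"
    unfolding P by (simp add: abs_mult)
  also have "\<dots> \<le> (K * exp (- lm * (ss - s j))) * 1 * B"
    using k1 e2 d1 by (intro mult_mono) (auto simp: Knn)
  finally show ?thesis unfolding j_def by (simp add: algebra_simps)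
qed

lemma term_bound: "exp (- lm * (ss - s (k - 1 - int i))) \<le> exp (- lm * W) ^ (i div p)"
proof -
  define m where "m = i div p"
  define r where "r = i mod p"
  have i: "int i = int r + int p * int m" unfolding m_def r_def
    by (metis of_nat_add of_nat_mult mod_div_mult_eq add.commute mult.commute)
  have "s (k - 1 - int i) = s ((k - 1 - int r) - int p * int m)" using i by (simp add: algebra_simps)
  also have "\<dots> = s (k - 1 - int r) - real m * W" by (rule sper_iter)
  finally have e: "s (k - 1 - int i) = s (k - 1 - int r) - real m * W" .
  have "s (k - 1 - int r) \<le> s (k-1)" using smono by (simp add: strict_mono_less_eq)
  then have "ss - s (k - 1 - int i) \<ge> real m * W" using e ss_bounds by linarith
  then have "exp (- lm * (ss - s (k - 1 - int i))) \<le> exp (real m * (- lm * W))"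
    using lmpos by simp
  also have "\<dots> = exp (- lm * W) ^ m" by (rule exp_of_nat_mult)
  finally show ?thesis unfolding m_def .
qed

lemma sum_bound:
  "(\<Sum>i<M*p. exp (- lm * (ss - s (k - 1 - int i)))) \<le> real p / (1 - exp (- lm * W))"
proof -
  define q where "q = exp (- lm * W)"
  have q: "0 \<le> q" "q < 1" unfolding q_def using lmpos Wpos by auto
  have "(\<Sum>i<M*p. exp (- lm * (ss - s (k - 1 - int i)))) \<le> (\<Sum>i<M*p. q ^ (i div p))"
    unfolding q_def by (intro sum_mono term_bound)
  also have "\<dots> = real p * (\<Sum>j<M. q ^ j)" by (rule block_sum[OF ppos])
  also have "\<dots> = real p * ((1 - q ^ M) / (1 - q))" using q by (simp add: sum_gp_strict)
  also have "\<dots> \<le> real p * (1 / (1 - q))"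
    using q by (intro mult_left_mono divide_right_mono) auto
  finally show ?thesis unfolding q_def by simp
qed

lemma core_bound: "\<bar>d t\<bar> \<le> G * (K / lm + real p * \<delta>m * K / (1 - exp (- lm * W)))"
proof -
  define q where "q = exp (- lm * W)"
  have q: "0 \<le> q" "q < 1" unfolding q_def using lmpos Wpos by auto
  define c where "c = K * B * exp (lm * (s k - ss))"
  have c: "c \<ge> 0" unfolding c_def using Knn Bnn by simp
  have dmnn: "\<delta>m \<ge> 0" using dlm[of 0] dlt_pos[OF mono, of 0] by simp
  have GK: "G * K \<ge> 0" using Gnn Knn by simp
  have "\<forall>M\<ge>1. \<bar>d t\<bar> \<le> G * (K / lm + real p * \<delta>m * K / (1 - exp (- lm * W))) + c * q ^ M"
  proof (intro allI impI)
    fix M :: nat assume M: "M \<ge> 1"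
    define N where "N = M * p"
    have N1: "N \<ge> 1" unfolding N_def using M ppos by simp
    have C: "\<bar>d t\<bar> \<le> \<bar>Phi (k - int N) (\<theta> (2*(k - int N) - 1))\<bar>
      + G * K / lm * (1 - exp (- lm * (ss - s (k - int N - 1))))
      + \<delta>m * G * K * (\<Sum>i<N. exp (- lm * (ss - s (k - 1 - int i))))" by (rule stepC)
    have T: "\<bar>Phi (k - int N) (\<theta> (2*(k - int N) - 1))\<bar> \<le> K * B * exp (- lm * (ss - s (k - int N)))"
      by (rule tail[OF N1])
    have sN: "s (k - int N) = s k - real M * W"
      using sper_iter[of k M] unfolding N_def by (simp add: mult.commute)
    have "exp (- lm * (ss - s (k - int N))) = exp (lm * (s k - ss)) * exp (real M * (- lm * W))"
      unfolding sN by (simp add: exp_add[symmetric] algebra_simps)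
    then have T2: "K * B * exp (- lm * (ss - s (k - int N))) = c * q ^ M"
      unfolding c_def q_def exp_of_nat_mult by simp
    have e1: "G * K / lm * (1 - exp (- lm * (ss - s (k - int N - 1)))) \<le> G * K / lm"
    proof -
      have "G * K / lm * (1 - exp (- lm * (ss - s (k - int N - 1)))) \<le> G * K / lm * 1"
        using GK lmpos by (intro mult_left_mono) auto
      then show ?thesis by simp
    qed
    have e2: "\<delta>m * G * K * (\<Sum>i<N. exp (- lm * (ss - s (k - 1 - int i)))) \<le> \<delta>m * G * K * (real p / (1 - q))"
    proof -
      have "0 \<le> \<delta>m * G * K" using dmnn GK by (simp add: mult.assoc)
      then show ?thesis using sum_bound[of M] unfolding N_def q_def by (intro mult_left_mono) auto
    qed
    have alg: "G * K / lm + \<delta>m * G * K * (real p / (1 - q)) = G * (K / lm + real p * \<delta>m * K / (1 - q))"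
      by (simp add: algebra_simps)
    show "\<bar>d t\<bar> \<le> G * (K / lm + real p * \<delta>m * K / (1 - exp (- lm * W))) + c * q ^ M"
      using C T T2 e1 e2 alg unfolding q_def by linarith
  qed
  then show ?thesis by (rule geo_limit[OF _ c q])
qed

end



lemma cells_fin: "finite (cells m n)" unfolding cells_def by simp
lemma cells_ne: "m \<ge> 1 \<Longrightarrow> n \<ge> 1 \<Longrightarrow> cells m n \<noteq> {}" unfolding cells_def by auto
lemma nbhd_sub: "nbhd m n r c \<subseteq> cells m n" unfolding nbhd_def by auto

lemma abs_le_vnorm: "c \<in> cells m n \<Longrightarrow> \<bar>v c\<bar> \<le> vnorm m n v"
  unfolding vnorm_def by (rule Max_ge) (auto simp: cells_fin)

lemma in_T0: "t \<in> {\<theta> (2*k-1)..\<theta> (2*k)} \<Longrightarrow> t \<in> T0 \<theta>"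
  unfolding T0_def by blast

lemma T0_cases: "t \<in> T0 \<theta> \<Longrightarrow> \<exists>k. t \<in> {\<theta> (2*k-1)..\<theta> (2*k)}"
  unfolding T0_def by blast

lemma tb:
  fixes Mf Lf H D :: real
  assumes "\<forall>s. \<bar>f s\<bar> \<le> Mf" "\<forall>s1 s2. \<bar>f s1 - f s2\<bar> \<le> Lf * \<bar>s1 - s2\<bar>" "Lf \<ge> 0"
    and "\<bar>xc\<bar> \<le> H" "\<bar>yc - xc\<bar> \<le> D" "\<bar>yh - xh\<bar> \<le> D"
  shows "\<bar>f yh * yc - f xh * xc\<bar> \<le> (Mf + H * Lf) * D"
proof -
  have e: "f yh * yc - f xh * xc = f yh * (yc - xc) + (f yh - f xh) * xc" by (simp add: algebra_simps)
  have "\<bar>f yh * (yc - xc)\<bar> \<le> Mf * D" unfolding abs_mult using assms(1,5)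
    by (intro mult_mono) auto
  moreover have "\<bar>(f yh - f xh) * xc\<bar> \<le> (Lf * D) * H"
  proof -
    have "\<bar>f yh - f xh\<bar> \<le> Lf * D" using assms(2) assms(3) assms(6)
      by (meson mult_left_mono order_trans)
    then show ?thesis unfolding abs_mult using assms(4) by (intro mult_mono) (auto simp: assms(3))
  qed
  ultimately show ?thesis unfolding e by (simp add: algebra_simps)
qed

lemma uniq:
  fixes m n r p :: nat and \<theta> :: "int \<Rightarrow> real" and \<omega> :: real
    and a :: "nat \<times> nat \<Rightarrow> real" and C :: "nat \<times> nat \<Rightarrow> nat \<times> nat \<Rightarrow> real"
    and f :: "real \<Rightarrow> real" and K :: "nat \<times> nat \<Rightarrow> real" and Mf Lf H :: real
    and \<zeta> :: "int \<Rightarrow> vec" and x y :: "real \<Rightarrow> vec"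
  assumes mn: "m \<ge> 1" "n \<ge> 1"
    and a_pos: "\<forall>c\<in>cells m n. a c > 0"
    and C_nonneg: "\<forall>c\<in>cells m n. \<forall>hl\<in>cells m n. C c hl \<ge> 0"
    and \<theta>_mono: "strict_mono \<theta>" and \<theta>_0: "\<theta> (-1) < 0" "0 < \<theta> 0"
    and p_pos: "p \<ge> 1"
    and \<theta>_per: "\<forall>k. \<theta> (k + 2 * int p) = \<theta> k + \<omega>"
    and C2: "\<forall>c\<in>cells m n. lam \<theta> p (a c) > 0"
    and C3: "\<forall>s. \<bar>f s\<bar> \<le> Mf"
    and C4: "Lf > 0" "\<forall>s1 s2. \<bar>f s1 - f s2\<bar> \<le> Lf * \<bar>s1 - s2\<bar>"
    and K: "\<forall>c\<in>cells m n. K c > 0 \<and>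
              (\<forall>s \<tau>. \<tau> \<le> s \<longrightarrow> \<bar>uu \<theta> (a c) s \<tau>\<bar> \<le> K c * exp (- lam \<theta> p (a c) * (s - \<tau>)))"
    and C5: "(Mf + H * Lf) * cbar m n r \<theta> p a C K < 1"
    and x_sol: "is_solution m n r a C f \<theta> \<zeta> x"
    and y_sol: "is_solution m n r a C f \<theta> \<zeta> y"
    and x_bdd: "\<forall>t\<in>T0 \<theta>. vnorm m n (x t) \<le> H"
    and y_bdd: "\<forall>t\<in>T0 \<theta>. vnorm m n (y t) \<le> H"
  shows "\<forall>t\<in>T0 \<theta>. \<forall>c\<in>cells m n. y t c = x t c"
proof -
  define \<kappa> where "\<kappa> = (Mf + H * Lf) * cbar m n r \<theta> p a C K"
  define S where "S = {\<bar>x t c - y t c\<bar> | t c. t \<in> T0 \<theta> \<and> c \<in> cells m n}"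
  define D where "D = Sup S"
  obtain c0 where c0: "c0 \<in> cells m n" using cells_ne[OF mn] by blast
  have t0: "\<theta> 0 \<in> T0 \<theta>" using in_T0[of "\<theta> 0" \<theta> 0] \<theta>_mono by (simp add: strict_mono_less_eq)
  have Hnn: "H \<ge> 0" using abs_le_vnorm[OF c0, of "x (\<theta> 0)"] x_bdd t0 by force
  have xH: "\<bar>x t c\<bar> \<le> H" if "t \<in> T0 \<theta>" "c \<in> cells m n" for t c
    using abs_le_vnorm[OF that(2), of "x t"] x_bdd that(1) by force
  have yH: "\<bar>y t c\<bar> \<le> H" if "t \<in> T0 \<theta>" "c \<in> cells m n" for t c
    using abs_le_vnorm[OF that(2), of "y t"] y_bdd that(1) by force
  have Sne: "S \<noteq> {}" unfolding S_def using t0 c0 by blast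
  have Sbdd: "bdd_above S" unfolding S_def bdd_above_def
  proof (intro exI allI ballI)
    fix z assume "z \<in> {\<bar>x t c - y t c\<bar> | t c. t \<in> T0 \<theta> \<and> c \<in> cells m n}"
    then obtain t c where "z = \<bar>x t c - y t c\<bar>" "t \<in> T0 \<theta>" "c \<in> cells m n" by blast
    then show "z \<le> 2 * H" using xH yH by fastforce
  qed
  have hD: "\<bar>x t c - y t c\<bar> \<le> D" if "t \<in> T0 \<theta>" "c \<in> cells m n" for t c
  proof -
    have "\<bar>x t c - y t c\<bar> \<in> S" unfolding S_def using that by blast
    then show ?thesis unfolding D_def by (rule cSup_upper[OF _ Sbdd])
  qed
  have Dnn: "D \<ge> 0" using hD[OF t0 c0] by linarith
  have MLnn: "(Mf + H * Lf) * D \<ge> 0"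
  proof -
    have "Mf \<ge> 0" using C3 by (meson abs_ge_zero order_trans)
    then show ?thesis using Hnn C4 Dnn by simp
  qed
  have main: "\<bar>x t c - y t c\<bar> \<le> \<kappa> * D" if tT: "t \<in> T0 \<theta>" and c: "c \<in> cells m n" for t c
  proof -
    define Sc where "Sc = (\<Sum>hl\<in>nbhd m n r c. C c hl)"
    define G where "G = Sc * ((Mf + H * Lf) * D)"
    define d where "d t = x t c - y t c" for t
    define g where "g t = - (\<Sum>hl\<in>nbhd m n r c. C c hl * f (x t hl) * x t c)
                        + (\<Sum>hl\<in>nbhd m n r c. C c hl * f (y t hl) * y t c)" for t
    have Kc: "K c > 0" "\<And>s \<tau>. \<tau> \<le> s \<Longrightarrow> \<bar>uu \<theta> (a c) s \<tau>\<bar> \<le> K c * exp (- lam \<theta> p (a c) * (s - \<tau>))"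
      using K c by auto
    have gb: "\<bar>g t\<bar> \<le> G" if "t \<in> T0 \<theta>" for t
    proof -
      have "g t = (\<Sum>hl\<in>nbhd m n r c. C c hl * (f (y t hl) * y t c - f (x t hl) * x t c))"
        unfolding g_def by (simp add: sum_subtractf[symmetric] algebra_simps)
      then have "\<bar>g t\<bar> \<le> (\<Sum>hl\<in>nbhd m n r c. \<bar>C c hl * (f (y t hl) * y t c - f (x t hl) * x t c)\<bar>)"
        by (simp add: sum_abs)
      also have "\<dots> \<le> (\<Sum>hl\<in>nbhd m n r c. C c hl * ((Mf + H * Lf) * D))"
      proof (rule sum_mono)
        fix hl assume hl: "hl \<in> nbhd m n r c"
        then have hlc: "hl \<in> cells m n" using nbhd_sub by blast
        have Cn: "C c hl \<ge> 0" using C_nonneg c hlc by blast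
        have "\<bar>f (y t hl) * y t c - f (x t hl) * x t c\<bar> \<le> (Mf + H * Lf) * D"
        proof (rule tb[OF C3 C4(2)])
          show "0 \<le> Lf" using C4 by simp
          show "\<bar>x t c\<bar> \<le> H" by (rule xH[OF that c])
          show "\<bar>y t c - x t c\<bar> \<le> D" using hD[OF that c] by (simp add: abs_minus_commute)
          show "\<bar>y t hl - x t hl\<bar> \<le> D" using hD[OF that hlc] by (simp add: abs_minus_commute)
        qed
        then show "\<bar>C c hl * (f (y t hl) * y t c - f (x t hl) * x t c)\<bar> \<le> C c hl * ((Mf + H * Lf) * D)"
          unfolding abs_mult using Cn by (intro mult_mono) auto
      qed
      also have "\<dots> = G" unfolding G_def Sc_def by (simp add: sum_distrib_right)
      finally show ?thesis .
    qed
    have cinst: "core \<theta> (sk \<theta>) (a c) (lam \<theta> p (a c)) (K c) (psi_om \<theta> p) (dmax \<theta> p) G D p d g"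
    proof unfold_locales
      show "strict_mono \<theta>" by (rule \<theta>_mono)
      show "\<And>j. sk \<theta> j - sk \<theta> (j - 1) = \<theta> (2 * j) - \<theta> (2 * j - 1)" by (rule sk_step[OF \<theta>_mono \<theta>_0])
      show "\<And>j. sk \<theta> (j + int p) = sk \<theta> j + psi_om \<theta> p" by (rule sk_per[OF \<theta>_mono \<theta>_0 \<theta>_per])
      show "psi_om \<theta> p > 0" by (rule psi_om_pos[OF \<theta>_mono p_pos])
      show "p \<ge> 1" by (rule p_pos)
      show "a c > 0" using a_pos c by blast
      show "lam \<theta> p (a c) > 0" using C2 c by blast
      show "\<bar>exp (- a c * (\<sigma> - \<tau>)) * (\<Prod>\<nu>\<in>{l..k}. 1 - dlt \<theta> \<nu> * a c)\<bar> \<le> K c * exp (- lam \<theta> p (a c) * (\<sigma> - \<tau>))"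
        if "sk \<theta> (l - 1) < \<tau>" "\<tau> \<le> sk \<theta> l" "sk \<theta> k < \<sigma>" "\<sigma> \<le> sk \<theta> (k + 1)" "\<tau> \<le> \<sigma>" for l k \<tau> \<sigma>
        using Kc(2)[OF that(5)] uu_eq[OF \<theta>_mono \<theta>_0 that(1-4), of "a c"] by simp
      show "\<And>j. dlt \<theta> j \<le> dmax \<theta> p" by (rule dlt_le_dmax[OF \<theta>_mono \<theta>_per p_pos])
      show "continuous_on {\<theta> (2 * j - 1)..\<theta> (2 * j)} d" for j
        unfolding d_def using x_sol y_sol c unfolding is_solution_def by (intro continuous_intros) auto
      show "(d has_real_derivative - a c * d t + g t) (at t within {\<theta> (2 * j - 1)..\<theta> (2 * j)})"
        if "t \<in> {\<theta> (2 * j - 1)..\<theta> (2 * j)}" for j t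
      proof -
        have dx: "((\<lambda>t. x t c) has_real_derivative
             (- a c * x t c - (\<Sum>hl\<in>nbhd m n r c. C c hl * f (x t hl) * x t c) + \<zeta> j c))
          (at t within {\<theta> (2*j - 1) .. \<theta> (2*j)})" using x_sol c that unfolding is_solution_def by blast
        have dy: "((\<lambda>t. y t c) has_real_derivative
             (- a c * y t c - (\<Sum>hl\<in>nbhd m n r c. C c hl * f (y t hl) * y t c) + \<zeta> j c))
          (at t within {\<theta> (2*j - 1) .. \<theta> (2*j)})" using y_sol c that unfolding is_solution_def by blast
        show ?thesis unfolding d_def[abs_def] using DERIV_diff[OF dx dy]
          by (rule DERIV_cong) (simp add: g_def algebra_simps)
      qed
      show "d (\<theta> (2 * j + 1)) = (1 - dlt \<theta> j * a c) * d (\<theta> (2 * j)) + dlt \<theta> j * g (\<theta> (2 * j))" for j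
      proof -
        have "x (\<theta> (2*j + 1)) c =
          (1 - dlt \<theta> j * a c) * x (\<theta> (2*j)) c
          - dlt \<theta> j * (\<Sum>hl\<in>nbhd m n r c. C c hl * f (x (\<theta> (2*j)) hl) * x (\<theta> (2*j)) c)
          + dlt \<theta> j * \<zeta> j c" using x_sol c unfolding is_solution_def by blast
        moreover have "y (\<theta> (2*j + 1)) c =
          (1 - dlt \<theta> j * a c) * y (\<theta> (2*j)) c
          - dlt \<theta> j * (\<Sum>hl\<in>nbhd m n r c. C c hl * f (y (\<theta> (2*j)) hl) * y (\<theta> (2*j)) c)
          + dlt \<theta> j * \<zeta> j c" using y_sol c unfolding is_solution_def by blast
        ultimately show ?thesis unfolding d_def g_def by (simp add: algebra_simps)
      qed
      show "\<bar>g t\<bar> \<le> G" if "t \<in> {\<theta> (2 * j - 1)..\<theta> (2 * j)}" for j t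
        using gb in_T0[OF that] by blast
      show "\<bar>d t\<bar> \<le> D" if "t \<in> {\<theta> (2 * j - 1)..\<theta> (2 * j)}" for j t
        unfolding d_def using hD[OF in_T0[OF that] c] .
    qed
    have half: "\<bar>d u\<bar> \<le> \<kappa> * D" if "\<theta> (2*k-1) < u" "u \<le> \<theta> (2*k)" for k u
    proof -
      interpret core_pt \<theta> "sk \<theta>" "a c" "lam \<theta> p (a c)" "K c" "psi_om \<theta> p" "dmax \<theta> p" G D p d g k u
        by (intro core_pt.intro cinst core_pt_axioms.intro that)
      have "\<bar>d u\<bar> \<le> G * coefK \<theta> p (a c) (K c)" using core_bound unfolding coefK_def .
      also have "\<dots> = (coefK \<theta> p (a c) (K c) * Sc) * ((Mf + H * Lf) * D)" unfolding G_def by simp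
      also have "\<dots> \<le> cbar m n r \<theta> p a C K * ((Mf + H * Lf) * D)"
      proof (rule mult_right_mono[OF _ MLnn])
        show "coefK \<theta> p (a c) (K c) * Sc \<le> cbar m n r \<theta> p a C K"
          unfolding cbar_def Sc_def by (rule Max_ge) (use c cells_fin in auto)
      qed
      also have "\<dots> = \<kappa> * D" unfolding \<kappa>_def by simp
      finally show ?thesis .
    qed
    obtain k where k: "t \<in> {\<theta> (2*k-1)..\<theta> (2*k)}" using T0_cases[OF tT] by blast
    show ?thesis
    proof (cases "t = \<theta> (2*k-1)")
      case False
      then show ?thesis using half[of k t] k unfolding d_def by auto
    next
      case True
      have lt: "\<theta> (2*k-1) < \<theta> (2*k)" using \<theta>_mono by (simp add: strict_mono_less)
      have "\<bar>d (\<theta> (2*k-1))\<bar> \<le> \<kappa> * D"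
      proof (rule left_end_bound[OF _ lt])
        show "continuous_on {\<theta> (2*k-1)..\<theta> (2*k)} d"
          unfolding d_def using x_sol y_sol c unfolding is_solution_def by (intro continuous_intros) auto
        show "\<forall>t\<in>{\<theta> (2*k-1)<..\<theta> (2*k)}. \<bar>d t\<bar> \<le> \<kappa> * D" using half by auto
      qed
      then show ?thesis using True unfolding d_def by simp
    qed
  qed
  have "Sup S \<le> \<kappa> * D"
  proof (rule cSup_least[OF Sne])
    fix z assume "z \<in> S"
    then obtain t c where "z = \<bar>x t c - y t c\<bar>" "t \<in> T0 \<theta>" "c \<in> cells m n" unfolding S_def by blast
    then show "z \<le> \<kappa> * D" using main by blast
  qed
  then have "D \<le> \<kappa> * D" by (simp add: D_def)
  then have "D \<le> 0" using C5 Dnn unfolding \<kappa>_def by (smt (verit) mult_le_cancel_right1)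
  then show ?thesis using hD by (metis abs_le_zero_iff eq_iff_diff_eq_0 order_trans)
qed




theorem mainTheorem5:
  fixes m n r p q0 :: nat and \<theta> :: "int \<Rightarrow> real" and \<omega> :: real
    and a :: "nat \<times> nat \<Rightarrow> real" and C :: "nat \<times> nat \<Rightarrow> nat \<times> nat \<Rightarrow> real"
    and f :: "real \<Rightarrow> real" and \<Lambda> :: "vec set" and F :: "vec \<Rightarrow> vec"
    and K :: "nat \<times> nat \<Rightarrow> real" and Mf Lf :: real
    and \<zeta> :: "int \<Rightarrow> vec" and x :: "real \<Rightarrow> vec"
  assumes mn: "m \<ge> 1" "n \<ge> 1"
    and a_pos: "\<forall>c\<in>cells m n. a c > 0"
    and C_nonneg: "\<forall>c\<in>cells m n. \<forall>hl\<in>cells m n. C c hl \<ge> 0"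
    and f_cont: "continuous_on UNIV f"
    and \<theta>_mono: "strict_mono \<theta>" and \<theta>_0: "\<theta> (-1) < 0" "0 < \<theta> 0"
    and \<omega>_pos: "\<omega> > 0" and p_pos: "p \<ge> 1"
    and \<theta>_per: "\<forall>k. \<theta> (k + 2 * int p) = \<theta> k + \<omega>"
    and \<Lambda>_compact: "compact \<Lambda>" and \<Lambda>_cells: "\<forall>v\<in>\<Lambda>. \<forall>c. c \<notin> cells m n \<longrightarrow> v c = 0"
    and F_cont: "continuous_on \<Lambda> F" and F_maps: "F ` \<Lambda> \<subseteq> \<Lambda>"
    and C1: "\<forall>k. \<forall>c\<in>cells m n. dlt \<theta> k * a c \<noteq> 1"
    and C2: "\<forall>c\<in>cells m n. lam \<theta> p (a c) > 0"
    and C3: "Mf > 0" "\<forall>s. \<bar>f s\<bar> \<le> Mf"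
    and C4: "Lf > 0" "\<forall>s1 s2. \<bar>f s1 - f s2\<bar> \<le> Lf * \<bar>s1 - s2\<bar>"
    and K: "\<forall>c\<in>cells m n. K c > 0 \<and>
              (\<forall>s \<tau>. \<tau> \<le> s \<longrightarrow> \<bar>uu \<theta> (a c) s \<tau>\<bar> \<le> K c * exp (- lam \<theta> p (a c) * (s - \<tau>)))"
    and C5: "(Mf + H0 m n r \<theta> p a C K Mf \<Lambda> F * Lf) * cbar m n r \<theta> p a C K < 1"
    and \<zeta>_Theta: "in_Theta \<Lambda> F \<zeta>"
    and q0_pos: "q0 \<ge> 1" and \<zeta>_per: "\<forall>k. \<zeta> (k + int q0) = \<zeta> k"
    and x_sol: "is_solution m n r a C f \<theta> \<zeta> x"
    and x_bdd: "\<forall>t\<in>T0 \<theta>. vnorm m n (x t) \<le> H0 m n r \<theta> p a C K Mf \<Lambda> F"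
  shows "\<forall>t\<in>T0 \<theta>. \<forall>c\<in>cells m n.
           x (t + real (lcm q0 p div p) * \<omega>) c = x t c"
proof -
  define p0 where "p0 = lcm q0 p div p"
  define \<Omega> where "\<Omega> = real p0 * \<omega>"
  define Pi where "Pi = int p * int p0"
  define H where "H = H0 m n r \<theta> p a C K Mf \<Lambda> F"
  have pp0: "p * p0 = lcm q0 p" unfolding p0_def by simp
  have th_sh: "\<theta> (k + 2 * Pi) = \<theta> k + \<Omega>" for k
    using theta_shift_nat[OF \<theta>_per, of k p0] unfolding Pi_def \<Omega>_def by (simp add: mult.assoc)
  have zeta_nat: "\<zeta> (k + int q0 * int N) = \<zeta> k" for k N
  proof (induction N)
    case 0 then show ?case by simp
  next
    case (Suc N)
    have "\<zeta> (k + int q0 * int (Suc N)) = \<zeta> ((k + int q0 * int N) + int q0)" by (simp add: algebra_simps)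
    also have "\<dots> = \<zeta> (k + int q0 * int N)" using \<zeta>_per by blast
    finally show ?case using Suc by simp
  qed
  have ze_sh: "\<zeta> (k + Pi) = \<zeta> k" for k
  proof -
    obtain N where N: "lcm q0 p = q0 * N" by (metis dvd_lcm1 dvdE)
    have "Pi = int q0 * int N" unfolding Pi_def using pp0 N by (metis of_nat_mult)
    then show ?thesis using zeta_nat by simp
  qed
  have dlt_sh: "dlt \<theta> (k + Pi) = dlt \<theta> k" for k
  proof -
    have "\<theta> (2 * (k + Pi) + 1) = \<theta> ((2*k+1) + 2 * Pi)" "\<theta> (2 * (k + Pi)) = \<theta> (2*k + 2 * Pi)"
      by (simp_all add: algebra_simps)
    then show ?thesis unfolding dlt_def using th_sh by simp
  qed
  have ivl: "{\<theta> (2*(k+Pi)-1)..\<theta> (2*(k+Pi))} = (\<lambda>t. t + \<Omega>) ` {\<theta> (2*k-1)..\<theta> (2*k)}" for k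
  proof -
    have "\<theta> (2*(k+Pi)-1) = \<theta> ((2*k-1) + 2*Pi)" "\<theta> (2*(k+Pi)) = \<theta> (2*k + 2*Pi)"
      by (simp_all add: algebra_simps)
    then show ?thesis using th_sh by simp
  qed
  define y where "y t = x (t + \<Omega>)" for t
  have y_sol: "is_solution m n r a C f \<theta> \<zeta> y"
    unfolding is_solution_def
  proof (intro allI ballI conjI)
    fix k c assume c: "c \<in> cells m n"
    have xs: "continuous_on {\<theta> (2*(k+Pi)-1)..\<theta> (2*(k+Pi))} (\<lambda>t. x t c)"
      "\<And>t. t \<in> {\<theta> (2*(k+Pi)-1)..\<theta> (2*(k+Pi))} \<Longrightarrow> ((\<lambda>t. x t c) has_real_derivative
             (- a c * x t c - (\<Sum>hl\<in>nbhd m n r c. C c hl * f (x t hl) * x t c) + \<zeta> (k+Pi) c))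
          (at t within {\<theta> (2*(k+Pi)-1)..\<theta> (2*(k+Pi))})"
      "x (\<theta> (2*(k+Pi) + 1)) c =
          (1 - dlt \<theta> (k+Pi) * a c) * x (\<theta> (2*(k+Pi))) c
          - dlt \<theta> (k+Pi) * (\<Sum>hl\<in>nbhd m n r c. C c hl * f (x (\<theta> (2*(k+Pi))) hl) * x (\<theta> (2*(k+Pi))) c)
          + dlt \<theta> (k+Pi) * \<zeta> (k+Pi) c"
      using x_sol c unfolding is_solution_def by blast+
    show "continuous_on {\<theta> (2*k-1)..\<theta> (2*k)} (\<lambda>t. y t c)"
      unfolding y_def
    proof (rule continuous_on_compose2[OF xs(1)])
      show "continuous_on {\<theta> (2*k-1)..\<theta> (2*k)} (\<lambda>t. t + \<Omega>)" by (intro continuous_intros)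
      show "(\<lambda>t. t + \<Omega>) ` {\<theta> (2*k-1)..\<theta> (2*k)} \<subseteq> {\<theta> (2*(k+Pi)-1)..\<theta> (2*(k+Pi))}"
        unfolding ivl by (rule subset_refl)
    qed
    fix t assume t: "t \<in> {\<theta> (2*k-1)..\<theta> (2*k)}"
    have tt: "t + \<Omega> \<in> {\<theta> (2*(k+Pi)-1)..\<theta> (2*(k+Pi))}" unfolding ivl using t by blast
    have D1: "((\<lambda>t. x t c) has_real_derivative
             (- a c * x (t+\<Omega>) c - (\<Sum>hl\<in>nbhd m n r c. C c hl * f (x (t+\<Omega>) hl) * x (t+\<Omega>) c) + \<zeta> (k+Pi) c))
          (at ((\<lambda>t. t + \<Omega>) t) within ((\<lambda>t. t + \<Omega>) ` {\<theta> (2*k-1)..\<theta> (2*k)}))"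
      using xs(2)[OF tt] unfolding ivl by simp
    have D2: "((\<lambda>t. t + \<Omega>) has_real_derivative 1) (at t within {\<theta> (2*k-1)..\<theta> (2*k)})"
      by (auto intro!: derivative_eq_intros)
    show "((\<lambda>t. y t c) has_real_derivative
             (- a c * y t c - (\<Sum>hl\<in>nbhd m n r c. C c hl * f (y t hl) * y t c) + \<zeta> k c))
          (at t within {\<theta> (2*k-1)..\<theta> (2*k)})"
      using DERIV_image_chain[OF D1 D2] unfolding y_def comp_def ze_sh by simp
  next
    fix k c assume c: "c \<in> cells m n"
    have xj: "x (\<theta> (2*(k+Pi) + 1)) c =
          (1 - dlt \<theta> (k+Pi) * a c) * x (\<theta> (2*(k+Pi))) c
          - dlt \<theta> (k+Pi) * (\<Sum>hl\<in>nbhd m n r c. C c hl * f (x (\<theta> (2*(k+Pi))) hl) * x (\<theta> (2*(k+Pi))) c)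
          + dlt \<theta> (k+Pi) * \<zeta> (k+Pi) c"
      using x_sol c unfolding is_solution_def by blast
    have e1: "\<theta> (2*(k+Pi) + 1) = \<theta> (2*k+1) + \<Omega>" "\<theta> (2*(k+Pi)) = \<theta> (2*k) + \<Omega>"
      using th_sh[of "2*k+1"] th_sh[of "2*k"] by (simp_all add: algebra_simps)
    show "y (\<theta> (2*k + 1)) c =
          (1 - dlt \<theta> k * a c) * y (\<theta> (2*k)) c
          - dlt \<theta> k * (\<Sum>hl\<in>nbhd m n r c. C c hl * f (y (\<theta> (2*k)) hl) * y (\<theta> (2*k)) c)
          + dlt \<theta> k * \<zeta> k c"
      using xj unfolding y_def e1 dlt_sh ze_sh .
  qed
  have y_bdd: "\<forall>t\<in>T0 \<theta>. vnorm m n (y t) \<le> H"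
  proof
    fix t assume "t \<in> T0 \<theta>"
    then obtain k where "t \<in> {\<theta> (2*k-1)..\<theta> (2*k)}" using T0_cases by blast
    then have "t + \<Omega> \<in> {\<theta> (2*(k+Pi)-1)..\<theta> (2*(k+Pi))}" unfolding ivl by blast
    then have "t + \<Omega> \<in> T0 \<theta>" by (rule in_T0)
    then show "vnorm m n (y t) \<le> H" unfolding y_def H_def using x_bdd by blast
  qed
  have C5': "(Mf + H * Lf) * cbar m n r \<theta> p a C K < 1" using C5 unfolding H_def .
  have "\<forall>t\<in>T0 \<theta>. \<forall>c\<in>cells m n. y t c = x t c"
    by (rule uniq[OF mn a_pos C_nonneg \<theta>_mono \<theta>_0 p_pos \<theta>_per C2 C3(2) C4 K C5' x_sol y_sol _ y_bdd])
       (use x_bdd in \<open>simp add: H_def\<close>)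
  then show ?thesis unfolding y_def \<Omega>_def p0_def by blast
qed


end
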